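(* Let $\Omega$ be a completely regular Hausdorff space with Stone–Čech compactification $\beta\Omega$, and let $\mathcal{F}$ be a $z$-filter on $\Omega$. Let $\phi \in C(\Omega, \mathbb{C})$ (with $\phi^\beta:\beta\Omega\to\mathbb{C}\cup\{\infty\}$ its continuous extension and closures taken in $\mathbb{C}\cup\{\infty\}$), or let $\phi \in C(\Omega, X)$, $X$ a locally convex topological vector space, with $\overline{\phi(\Omega)}$ compact (with $\phi^\beta$ its Stone extension to $\beta\Omega$). Then \[ \phi^\beta\Big(\bigcap_{F \in \mathcal{F}}\mathrm{cl}_{\beta}F\Big) = \bigcap_{F \in \mathcal{F}} \phi^\beta(\mathrm{cl}_{\beta}F) = \bigcap_{F \in \mathcal{F}} \overline{\phi(F)}. \]
   Context: $\mathrm{cl}_\beta S$ denotes the closure of $S\subset\Omega$ in $\beta\Omega$. A zero-set of $\Omega$ is $h^{-1}(0)$ for some $h\in C(\Omega,\mathbb{R})$. A $z$-filter on $\Omega$ is a nonempty family $\mathcal{F}$ of zero-sets with $\emptyset\notin\mathcal{F}$, closed under finite intersections, and such that any zero-set containing a member of $\mathcal{F}$ belongs to $\mathcal{F}$. For $f$ continuous with relatively compact range, $f^\beta$ denotes the continuous (Stone) extension of $f$ to $\beta\Omega$ with $f^\beta|_\Omega=f$. *)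

theory Defs
  imports "HOL-Analysis.Analysis"
begin

definition zero_set :: "'a topology \<Rightarrow> 'a set \<Rightarrow> bool" where
  "zero_set \<Omega> Z \<longleftrightarrow>
     (\<exists>h. continuous_map \<Omega> euclideanreal h \<and> Z = {x \<in> topspace \<Omega>. h x = 0})"

definition z_filter :: "'a topology \<Rightarrow> 'a set set \<Rightarrow> bool" where
  "z_filter \<Omega> \<F> \<longleftrightarrow>
     \<F> \<noteq> {} \<and> (\<forall>Z\<in>\<F>. zero_set \<Omega> Z) \<and> {} \<notin> \<F> \<and>
     (\<forall>A\<in>\<F>. \<forall>C\<in>\<F>. A \<inter> C \<in> \<F>) \<and>
     (\<forall>A\<in>\<F>. \<forall>Z. zero_set \<Omega> Z \<and> A \<subseteq> Z \<longrightarrow> Z \<in> \<F>)"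

text \<open>(B, e) is a Stone-Cech compactification of Omega: B compact Hausdorff, e an embedding
  with dense image, and every bounded continuous real function on Omega extends continuously
  to B (Gillman-Jerison, Thm. 6.5 characterization).\<close>

definition stone_cech :: "'a topology \<Rightarrow> 'b topology \<Rightarrow> ('a \<Rightarrow> 'b) \<Rightarrow> bool" where
  "stone_cech \<Omega> B e \<longleftrightarrow>
     compact_space B \<and> Hausdorff_space B \<and> embedding_map \<Omega> B e \<and>
     B closure_of (e ` topspace \<Omega>) = topspace B \<and>
     (\<forall>f. continuous_map \<Omega> euclideanreal f \<and> bounded (f ` topspace \<Omega>) \<longrightarrow>
        (\<exists>g. continuous_map B euclideanreal g \<and> (\<forall>x\<in>topspace \<Omega>. g (e x) = f x)))"

text \<open>Riemann sphere C \<union> {\<infinity>} as the one-point compactification of C: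
  Some z is the point z, None is \<infinity>.\<close>

definition riemann_open :: "complex option set \<Rightarrow> bool" where
  "riemann_open U \<longleftrightarrow> open (Some -` U) \<and> (None \<in> U \<longrightarrow> compact (- (Some -` U)))"

lemma istopology_riemann_open: "istopology riemann_open"
  unfolding istopology_def
proof safe
  fix S T assume S: "riemann_open S" and T: "riemann_open T"
  show "riemann_open (S \<inter> T)"
    unfolding riemann_open_def
  proof safe
    show "open (Some -` (S \<inter> T))"
      using S T by (auto simp: riemann_open_def vimage_Int)
    assume "None \<in> S" "None \<in> T"
    then have "compact (- (Some -` S) \<union> - (Some -` T))"
      using S T by (auto simp: riemann_open_def intro: compact_Un)
    then show "compact (- (Some -` (S \<inter> T)))" by (simp add: vimage_Int)
  qed
next
  fix K assume K: "\<forall>S\<in>K. riemann_open S"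
  show "riemann_open (\<Union>K)"
    unfolding riemann_open_def
  proof safe
    show "open (Some -` \<Union>K)"
      using K by (auto simp: riemann_open_def vimage_Union intro!: open_Union)
    fix U assume "None \<in> U" "U \<in> K"
    then have c: "compact (- (Some -` U))" using K by (auto simp: riemann_open_def)
    have "closed (- (Some -` \<Union>K))"
      using K by (auto simp: riemann_open_def vimage_Union intro!: open_Union)
    moreover have "- (Some -` \<Union>K) \<subseteq> - (Some -` U)" using \<open>U \<in> K\<close> by auto
    ultimately show "compact (- (Some -` \<Union>K))"
      using c compact_Int_closed[of "- (Some -` U)" "- (Some -` \<Union>K)"]
      by (simp add: Int_absorb1)
  qed
qed

definition riemann_sphere :: "complex option topology" where
  "riemann_sphere = topology riemann_open"

text \<open>Hausdorff locally convex topological vector space structure on a real vector space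
  (complex spaces are in particular real vector spaces).\<close>

definition lctvs :: "'x::real_vector topology \<Rightarrow> bool" where
  "lctvs X \<longleftrightarrow>
     topspace X = UNIV \<and> Hausdorff_space X \<and>
     continuous_map (prod_topology X X) X (\<lambda>(x, y). x + y) \<and>
     continuous_map (prod_topology euclideanreal X) X (\<lambda>(c, x). c *\<^sub>R x) \<and>
     (\<forall>U. openin X U \<and> 0 \<in> U \<longrightarrow> (\<exists>V. openin X V \<and> 0 \<in> V \<and> convex V \<and> V \<subseteq> U))"

end

theory Submission
  imports Defs
begin



lemma openin_riemann: "openin riemann_sphere U \<longleftrightarrow> riemann_open U"
  by (simp add: riemann_sphere_def istopology_riemann_open)

lemma topspace_riemann: "topspace riemann_sphere = UNIV"
  unfolding topspace_def openin_riemann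
  by (rule Sup_eqI[THEN trans]) (auto simp: riemann_open_def intro!: exI[of _ UNIV]) 

lemma riemann_open_Some: "open U \<Longrightarrow> riemann_open (Some ` U)"
  by (simp add: riemann_open_def inj_vimage_image_eq)



lemma none_sep: "\<exists>U V. riemann_open U \<and> riemann_open V \<and> Some a \<in> U \<and> None \<in> V \<and> disjnt U V"
proof (intro exI conjI)
  show "riemann_open (Some ` ball a 1)" by (simp add: riemann_open_Some)
  have "Some -` (- Some ` cball a 1) = - cball a 1" by auto
  then show "riemann_open (- Some ` cball a 1)"
    by (simp add: riemann_open_def open_Compl)
  show "Some a \<in> Some ` ball a 1" by simp
  show "None \<in> - Some ` cball a 1" by auto
  show "disjnt (Some ` ball a 1) (- Some ` cball a 1)" by (auto simp: disjnt_def)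
qed

lemma Hausdorff_riemann: "Hausdorff_space riemann_sphere"
  unfolding Hausdorff_space_def openin_riemann
proof (intro allI impI)
  fix x y :: "complex option" assume "x \<in> topspace riemann_sphere \<and> y \<in> topspace riemann_sphere \<and> x \<noteq> y"
  hence xy: "x \<noteq> y" by simp
  show "\<exists>U V. riemann_open U \<and> riemann_open V \<and> x \<in> U \<and> y \<in> V \<and> disjnt U V"
  proof (cases x)
    case None
    then obtain a where a: "y = Some a" using xy by (cases y) auto
    obtain U V where "riemann_open U" "riemann_open V" "Some a \<in> U" "None \<in> V" "disjnt U V"
      using none_sep by blast
    then show ?thesis using None a disjnt_sym by metis
  next
    case (Some a)
    show ?thesis
    proof (cases y)
      case None
      then show ?thesis using Some none_sep by simp
    next
      case (Some b)
      with xy \<open>x = Some a\<close> have "a \<noteq> b" by simp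
      then obtain U V where "open U" "open V" "a \<in> U" "b \<in> V" "U \<inter> V = {}"
        using hausdorff by metis
      then have "riemann_open (Some ` U) \<and> riemann_open (Some ` V) \<and> x \<in> Some ` U \<and> y \<in> Some ` V \<and> disjnt (Some ` U) (Some ` V)"
        using \<open>x = Some a\<close> Some by (auto simp: riemann_open_Some disjnt_def)
      then show ?thesis by blast
    qed
  qed
qed


lemma img_closure:
  assumes "compact_space B" "Hausdorff_space Y" "continuous_map B Y f" "S \<subseteq> topspace B"
  shows "f ` (B closure_of S) = Y closure_of (f ` S)"
proof
  show "f ` (B closure_of S) \<subseteq> Y closure_of f ` S"
    by (rule continuous_map_image_closure_subset[OF assms(3)])
  have "closedin Y (f ` (B closure_of S))"
    by (rule compactin_imp_closedin[OF assms(2) image_compactin[OF closedin_compact_space[OF assms(1) closedin_closure_of] assms(3)]])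
  moreover have "S \<subseteq> B closure_of S"
    using assms(4) by (rule closure_of_subset)
  then have "f ` S \<subseteq> f ` (B closure_of S)"
    by (rule image_mono)
  ultimately show "Y closure_of f ` S \<subseteq> f ` (B closure_of S)"
    by (rule closure_of_minimal[rotated])
qed

lemma directed_fin:
  assumes "finite G" "G \<noteq> {}" "G \<subseteq> I" and dir: "\<And>i j. i\<in>I \<Longrightarrow> j\<in>I \<Longrightarrow> \<exists>k\<in>I. A k \<subseteq> A i \<inter> A j"
  shows "\<exists>k\<in>I. A k \<subseteq> (\<Inter>i\<in>G. A i)"
  using assms(1,2,3)
proof (induction G rule: finite_ne_induct)
  case (singleton x) then show ?case by blast
next
  case (insert x F)
  then have "F \<subseteq> I" "x \<in> I" by simp_all
  with insert.IH obtain k where k: "k \<in> I" "A k \<subseteq> (\<Inter>i\<in>F. A i)" by blast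
  from dir[OF \<open>x \<in> I\<close> k(1)] obtain k' where "k' \<in> I" "A k' \<subseteq> A x \<inter> A k" by blast
  with k show ?case by blast
qed


lemma img_Inter:
  assumes "compact_space B" "Hausdorff_space Y" "continuous_map B Y f" "I \<noteq> {}"
    and clA: "\<And>i. i\<in>I \<Longrightarrow> closedin B (A i)"
    and dir: "\<And>i j. i\<in>I \<Longrightarrow> j\<in>I \<Longrightarrow> \<exists>k\<in>I. A k \<subseteq> A i \<inter> A j"
  shows "f ` (\<Inter>i\<in>I. A i) = (\<Inter>i\<in>I. f ` A i)"
proof
  show "f ` (\<Inter>i\<in>I. A i) \<subseteq> (\<Inter>i\<in>I. f ` A i)" by blast
  show "(\<Inter>i\<in>I. f ` A i) \<subseteq> f ` (\<Inter>i\<in>I. A i)"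
  proof
    fix y assume y: "y \<in> (\<Inter>i\<in>I. f ` A i)"
    define K where "K i = A i \<inter> {x \<in> topspace B. f x \<in> {y}}" for i
    obtain i0 where i0: "i0 \<in> I" using assms(4) by blast
    have yt: "y \<in> topspace Y"
    proof -
      have "y \<in> f ` A i0" using y i0 by blast
      moreover have "A i0 \<subseteq> topspace B" using clA[OF i0] by (rule closedin_subset)
      ultimately show ?thesis using assms(3) continuous_map_image_subset_topspace by blast
    qed
    have "closedin Y {y}"
      by (rule closedin_t1_singleton[OF Hausdorff_imp_t1_space[OF assms(2)] yt])
    then have pre: "closedin B {x \<in> topspace B. f x \<in> {y}}"
      by (rule closedin_continuous_map_preimage[OF assms(3)])
    have cl: "\<forall>C\<in>K ` I. closedin B C"
    proof
      fix C assume "C \<in> K ` I"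
      then obtain i where i: "i \<in> I" "C = K i" by blast
      show "closedin B C" unfolding i(2) K_def
        by (rule closedin_Int[OF clA[OF i(1)] pre])
    qed
    have fin: "\<forall>\<G>. finite \<G> \<and> \<G> \<subseteq> K ` I \<longrightarrow> \<Inter>\<G> \<noteq> {}"
    proof (intro allI impI)
      fix \<G> assume "finite \<G> \<and> \<G> \<subseteq> K ` I"
      then obtain G where G: "G \<subseteq> I" "finite G" "\<G> = K ` G"
        by (meson finite_subset_image)
      show "\<Inter>\<G> \<noteq> {}"
      proof (cases "G = {}")
        case True then show ?thesis using G by simp
      next
        case False
        obtain k where k: "k \<in> I" "A k \<subseteq> (\<Inter>i\<in>G. A i)"
          using directed_fin[OF G(2) False G(1) dir] by blast
        obtain x where x: "x \<in> A k" "f x = y" using y k(1) by blast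
        have xt: "x \<in> topspace B" using x(1) closedin_subset[OF clA[OF k(1)]] by blast
        have "x \<in> K i" if "i \<in> G" for i
          using x xt k(2) that unfolding K_def by blast
        then have "x \<in> \<Inter>\<G>" using G(3) by blast
        then show ?thesis by blast
      qed
    qed
    obtain x where x: "x \<in> \<Inter>(K ` I)"
      using assms(1)[unfolded compact_space_fip, rule_format, OF conjI[OF cl fin]] by blast
    then have "x \<in> (\<Inter>i\<in>I. A i)" unfolding K_def by blast
    moreover have "f x = y" using x i0 unfolding K_def by blast
    ultimately show "y \<in> f ` (\<Inter>i\<in>I. A i)" by blast
  qed
qed


lemma main_gen:
  fixes \<Omega> :: "'a topology" and B :: "'b topology" and e :: "'a \<Rightarrow> 'b" and Y :: "'c topology"
  assumes sc: "stone_cech \<Omega> B e" and zf: "z_filter \<Omega> \<F>"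
    and Y: "Hausdorff_space Y" and cont: "continuous_map B Y \<phi>b"
    and ext: "\<forall>x\<in>topspace \<Omega>. \<phi>b (e x) = \<psi> x"
  shows "\<phi>b ` (\<Inter>F\<in>\<F>. B closure_of (e ` F)) = (\<Inter>F\<in>\<F>. \<phi>b ` (B closure_of (e ` F))) \<and>
       (\<Inter>F\<in>\<F>. \<phi>b ` (B closure_of (e ` F))) = (\<Inter>F\<in>\<F>. Y closure_of (\<psi> ` F))"
proof
  have cB: "compact_space B" using sc by (simp add: stone_cech_def)
  have ce: "continuous_map \<Omega> B e" using sc unfolding stone_cech_def embedding_map_def by (meson homeomorphic_imp_continuous_map continuous_map_in_subtopology)
  have ne: "\<F> \<noteq> {}" using zf by (simp add: z_filter_def)
  have sub: "F \<subseteq> topspace \<Omega>" if "F \<in> \<F>" for F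
    using zf that unfolding z_filter_def zero_set_def by blast
  have int: "F1 \<inter> F2 \<in> \<F>" if "F1 \<in> \<F>" "F2 \<in> \<F>" for F1 F2
    using zf that unfolding z_filter_def by blast
  have esub: "e ` F \<subseteq> topspace B" if "F \<in> \<F>" for F
    using sub[OF that] ce continuous_map_image_subset_topspace by blast
  show "\<phi>b ` (\<Inter>F\<in>\<F>. B closure_of (e ` F)) = (\<Inter>F\<in>\<F>. \<phi>b ` (B closure_of (e ` F)))"
  proof (rule img_Inter[OF cB Y cont ne])
    fix F1 F2 assume "F1 \<in> \<F>" "F2 \<in> \<F>"
    then show "\<exists>k\<in>\<F>. B closure_of e ` k \<subseteq> B closure_of e ` F1 \<inter> B closure_of e ` F2"
    proof (intro bexI[of _ "F1 \<inter> F2"] int Int_greatest)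
      show "B closure_of e ` (F1 \<inter> F2) \<subseteq> B closure_of e ` F1"
        by (intro closure_of_mono image_mono) blast
      show "B closure_of e ` (F1 \<inter> F2) \<subseteq> B closure_of e ` F2"
        by (intro closure_of_mono image_mono) blast
    qed
  qed simp
  show "(\<Inter>F\<in>\<F>. \<phi>b ` (B closure_of (e ` F))) = (\<Inter>F\<in>\<F>. Y closure_of (\<psi> ` F))"
  proof (rule INF_cong[OF refl])
    fix F assume F: "F \<in> \<F>"
    have "\<phi>b ` e ` F = \<psi> ` F" using sub[OF F] ext by (force simp: image_image)
    then show "\<phi>b ` (B closure_of (e ` F)) = Y closure_of (\<psi> ` F)"
      using img_closure[OF cB Y cont esub[OF F]] by simp
  qed
qed

theorem lemma2p12:
  fixes \<Omega> :: "'a topology" and B :: "'b topology" and e :: "'a \<Rightarrow> 'b"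
    and \<F> :: "'a set set"
  assumes "completely_regular_space \<Omega>" and "Hausdorff_space \<Omega>"
    and "stone_cech \<Omega> B e"
    and "z_filter \<Omega> \<F>"
  shows
   "(\<forall>(\<phi> :: 'a \<Rightarrow> complex) \<phi>b.
       continuous_map \<Omega> euclidean \<phi> \<and> continuous_map B riemann_sphere \<phi>b \<and>
       (\<forall>x\<in>topspace \<Omega>. \<phi>b (e x) = Some (\<phi> x)) \<longrightarrow>
       \<phi>b ` (\<Inter>F\<in>\<F>. B closure_of (e ` F)) = (\<Inter>F\<in>\<F>. \<phi>b ` (B closure_of (e ` F))) \<and>
       (\<Inter>F\<in>\<F>. \<phi>b ` (B closure_of (e ` F))) = (\<Inter>F\<in>\<F>. riemann_sphere closure_of (Some ` \<phi> ` F)))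
    \<and>
    (\<forall>(X :: 'x::real_vector topology) \<phi> \<phi>b.
       lctvs X \<and> continuous_map \<Omega> X \<phi> \<and> compactin X (X closure_of (\<phi> ` topspace \<Omega>)) \<and>
       continuous_map B X \<phi>b \<and> (\<forall>x\<in>topspace \<Omega>. \<phi>b (e x) = \<phi> x) \<longrightarrow>
       \<phi>b ` (\<Inter>F\<in>\<F>. B closure_of (e ` F)) = (\<Inter>F\<in>\<F>. \<phi>b ` (B closure_of (e ` F))) \<and>
       (\<Inter>F\<in>\<F>. \<phi>b ` (B closure_of (e ` F))) = (\<Inter>F\<in>\<F>. X closure_of (\<phi> ` F)))"
proof (rule conjI; intro allI impI)
  fix \<phi> :: "'a \<Rightarrow> complex" and \<phi>b
  assume h: "continuous_map \<Omega> euclidean \<phi> \<and> continuous_map B riemann_sphere \<phi>b \<and>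
       (\<forall>x\<in>topspace \<Omega>. \<phi>b (e x) = Some (\<phi> x))"
  have "\<phi>b ` (\<Inter>F\<in>\<F>. B closure_of (e ` F)) = (\<Inter>F\<in>\<F>. \<phi>b ` (B closure_of (e ` F))) \<and>
       (\<Inter>F\<in>\<F>. \<phi>b ` (B closure_of (e ` F))) = (\<Inter>F\<in>\<F>. riemann_sphere closure_of ((\<lambda>x. Some (\<phi> x)) ` F))"
    using main_gen[OF assms(3,4) Hausdorff_riemann, of \<phi>b "\<lambda>x. Some (\<phi> x)"] h by blast
  then show "\<phi>b ` (\<Inter>F\<in>\<F>. B closure_of (e ` F)) = (\<Inter>F\<in>\<F>. \<phi>b ` (B closure_of (e ` F))) \<and>
       (\<Inter>F\<in>\<F>. \<phi>b ` (B closure_of (e ` F))) = (\<Inter>F\<in>\<F>. riemann_sphere closure_of (Some ` \<phi> ` F))"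
    by (simp only: image_image)
next
  fix X :: "'x::real_vector topology" and \<phi> \<phi>b
  assume h: "lctvs X \<and> continuous_map \<Omega> X \<phi> \<and> compactin X (X closure_of (\<phi> ` topspace \<Omega>)) \<and>
       continuous_map B X \<phi>b \<and> (\<forall>x\<in>topspace \<Omega>. \<phi>b (e x) = \<phi> x)"
  have "Hausdorff_space X" using h by (simp add: lctvs_def)
  then show "\<phi>b ` (\<Inter>F\<in>\<F>. B closure_of (e ` F)) = (\<Inter>F\<in>\<F>. \<phi>b ` (B closure_of (e ` F))) \<and>
       (\<Inter>F\<in>\<F>. \<phi>b ` (B closure_of (e ` F))) = (\<Inter>F\<in>\<F>. X closure_of (\<phi> ` F))"
    using main_gen[OF assms(3,4), of X \<phi>b \<phi>] h by blast
qed

end
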